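(* Let $A,B,C$ be logically independent events and let $0\le\alpha_1\le\beta_1\le 1$, $0\le\alpha_2\le\beta_2\le 1$. Consider the family of conditional events $\{C|A,\ B|A,\ C|AB\}$. The set of values $z$ for which there exist $x\in[\alpha_1,\beta_1]$ and $y\in[\alpha_2,\beta_2]$ such that the assessment $P(C|A)=x$, $P(B|A)=y$, $P(C|AB)=z$ is coherent is exactly the interval $[\alpha_3,\beta_3]$, where \[ \alpha_3=\begin{cases}\dfrac{\alpha_1+\alpha_2-1}{\alpha_2}, & \alpha_1+\alpha_2>1,\\[1ex] 0, & \alpha_1+\alpha_2\le 1,\end{cases} \qquad \beta_3=\begin{cases}\dfrac{\beta_1}{\alpha_2}, & \beta_1<\alpha_2,\\[1ex] 1, & \beta_1\ge \alpha_2.\end{cases} \] (Cautious Monotonicity: the bounds $P(C|A)\in[\alpha_1,\beta_1]$, $P(B|A)\in[\alpha_2,\beta_2]$ propagate exactly to $P(C|AB)\in[\alpha_3,\beta_3]$.)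
   Context: Events are elements of a Boolean algebra; $AB$ denotes conjunction, $A\vee B$ disjunction, $A^c$ negation. $A,B,C$ are logically independent if all eight conjunctions $A^{*}B^{*}C^{*}$ (each $X^{*}\in\{X,X^c\}$) are possible (nonempty). A conditional event $E|H$ requires $H\neq\emptyset$; conditional probabilities are treated as primitive (no requirement that $P(H)>0$). Coherence (de Finetti): an assessment $(p_1,\dots,p_n)$ on conditional events $E_1|H_1,\dots,E_n|H_n$ is coherent if for every nonempty $J\subseteq\{1,\dots,n\}$ and every real numbers $s_j$ ($j\in J$), the random gain $G=\sum_{j\in J}s_j\,I_{H_j}(I_{E_j}-p_j)$ (with $I$ denoting indicator functions) satisfies $\max G\ge 0$, where the maximum is taken over the possible worlds (atoms) contained in $\bigvee_{j\in J}H_j$. *)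

theory Defs
  imports Main "HOL-Library.Indicator_Function"
begin

text \<open>Events are modelled as subsets of a type of possible worlds 'w (a concrete
  Boolean algebra of sets: conjunction = intersection, disjunction = union,
  negation = complement). A conditional event E|H together with its assessed
  probability p is a triple (E, H, p).\<close>

definition logically_independent3 :: "'w set \<Rightarrow> 'w set \<Rightarrow> 'w set \<Rightarrow> bool" where
  "logically_independent3 A B C \<longleftrightarrow>
     (\<forall>A' \<in> {A, - A}. \<forall>B' \<in> {B, - B}. \<forall>C' \<in> {C, - C}. A' \<inter> B' \<inter> C' \<noteq> {})"

definition gain :: "('w set \<times> 'w set \<times> real) list \<Rightarrow> nat set \<Rightarrow> (nat \<Rightarrow> real) \<Rightarrow> 'w \<Rightarrow> real" where
  "gain as J s w = (\<Sum>j\<in>J. s j * indicator (fst (snd (as ! j))) w *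
        (indicator (fst (as ! j)) w - snd (snd (as ! j))))"

definition coherent :: "('w set \<times> 'w set \<times> real) list \<Rightarrow> bool" where
  "coherent as \<longleftrightarrow>
     (\<forall>i < length as. fst (snd (as ! i)) \<noteq> {}) \<and>
     (\<forall>J. J \<subseteq> {..<length as} \<longrightarrow> J \<noteq> {} \<longrightarrow>
        (\<forall>s :: nat \<Rightarrow> real. \<exists>w \<in> (\<Union>j\<in>J. fst (snd (as ! j))). gain as J s w \<ge> 0))"

end

theory Submission
  imports Defs
begin

lemma gain3:
  assumes "J \<subseteq> {..<3}"
  shows "gain [(C,A,x),(B,A,y),(C,A\<inter>B,z)] J s w =
    (if 0\<in>J then s 0 else 0) * indicator A w * (indicator C w - x)
  + (if 1\<in>J then s 1 else 0) * indicator A w * (indicator B w - y)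
  + (if 2\<in>J then s 2 else 0) * indicator (A\<inter>B) w * (indicator C w - z)"
proof -
  let ?as = "[(C,A,x),(B,A,y),(C,A\<inter>B,z)]"
  let ?g = "\<lambda>j. s j * indicator (fst (snd (?as ! j))) w *
        (indicator (fst (?as ! j)) w - snd (snd (?as ! j)))"
  have "sum ?g J = sum ?g ({..<3} \<inter> J)" using assms by (simp add: Int_absorb1)
  also have "\<dots> = sum (\<lambda>j. if j \<in> J then ?g j else 0) {..<3}"
    by (simp add: sum.inter_restrict)
  also have "\<dots> = (if 0\<in>J then ?g 0 else 0) + (if 1\<in>J then ?g 1 else 0) + (if 2\<in>J then ?g 2 else 0)"
  proof -
    have "{..<3::nat} = {0,1,2}" by auto
    then show ?thesis by simp
  qed
  finally show ?thesis unfolding gain_def by simp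
qed

lemma nec:
  assumes coh: "coherent [(C, A, x), (B, A, y), (C, A \<inter> B, z)]"
  shows "0 \<le> z" "z \<le> 1" "z*y \<le> x" "x \<le> z*y + 1 - y"
proof -
  let ?as = "[(C, A, x), (B, A, y), (C, A \<inter> B, z)]"
  have c: "\<And>J s. J \<subseteq> {..<3} \<Longrightarrow> J \<noteq> {} \<Longrightarrow>
     \<exists>w \<in> (\<Union>j\<in>J. fst (snd (?as ! j))). gain ?as J s w \<ge> 0"
  proof -
    have "\<forall>J. J \<subseteq> {..<length ?as} \<longrightarrow> J \<noteq> {} \<longrightarrow>
        (\<forall>s :: nat \<Rightarrow> real. \<exists>w \<in> (\<Union>j\<in>J. fst (snd (?as ! j))). gain ?as J s w \<ge> 0)"
      using coh unfolding coherent_def by (rule conjunct2)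
    moreover have "length ?as = 3" by simp
    ultimately show "\<And>J s. J \<subseteq> {..<3} \<Longrightarrow> J \<noteq> {} \<Longrightarrow>
     \<exists>w \<in> (\<Union>j\<in>J. fst (snd (?as ! j))). gain ?as J s w \<ge> 0" by metis
  qed
  have U2: "(\<Union>j\<in>{2::nat}. fst (snd (?as ! j))) = A \<inter> B" by (simp add: numeral_2_eq_2)
  have U3: "(\<Union>j\<in>{0,1,2::nat}. fst (snd (?as ! j))) = A" by (auto simp add: numeral_2_eq_2)
  obtain w where "w \<in> A \<inter> B" "gain ?as {2} (\<lambda>_. 1) w \<ge> 0"
    using c[of "{2}" "\<lambda>_. 1"] U2 by auto
  then show "z \<le> 1" by (cases "w \<in> C") (simp_all add: gain3)
  obtain w where "w \<in> A \<inter> B" "gain ?as {2} (\<lambda>_. -1) w \<ge> 0"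
    using c[of "{2}" "\<lambda>_. -1"] U2 by auto
  then show "0 \<le> z" by (cases "w \<in> C") (simp_all add: gain3)
  obtain w where "w \<in> A" "gain ?as {0,1,2} (\<lambda>j. if j = 0 then -1 else if j = 1 then z else 1) w \<ge> 0"
    using c[of "{0,1,2}" "\<lambda>j. if j = 0 then -1 else if j = 1 then z else 1"] U3 by auto
  then show "z*y \<le> x"
    by (simp add: gain3 indicator_def split: if_splits; cases "w \<in> B"; cases "w \<in> C"; simp add: algebra_simps)
  obtain w where "w \<in> A" "gain ?as {0,1,2} (\<lambda>j. if j = 0 then 1 else if j = 1 then 1 - z else -1) w \<ge> 0"
    using c[of "{0,1,2}" "\<lambda>j. if j = 0 then 1 else if j = 1 then 1 - z else -1"] U3 by auto
  then show "x \<le> z*y + 1 - y"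
    by (simp add: gain3 indicator_def split: if_splits; cases "w \<in> B"; cases "w \<in> C"; simp add: algebra_simps)
qed


lemma suff:
  assumes li: "logically_independent3 A B C"
    and z0: "0 \<le> z" and z1: "z \<le> 1" and y0: "0 \<le> y" and y1: "y \<le> 1"
    and l: "z*y \<le> x" and u: "x \<le> z*y + 1 - y"
  shows "coherent [(C, A, x), (B, A, y), (C, A \<inter> B, z)]"
proof -
  let ?as = "[(C, A, x), (B, A, y), (C, A \<inter> B, z)]"
  have li8: "A \<inter> B \<inter> C \<noteq> {}" "A \<inter> B \<inter> - C \<noteq> {}" "A \<inter> - B \<inter> C \<noteq> {}" "A \<inter> - B \<inter> - C \<noteq> {}"
    using li unfolding logically_independent3_def by simp_all
  obtain w1 where w1: "w1 \<in> A" "w1 \<in> B" "w1 \<in> C" using li8(1) by blast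
  obtain w2 where w2: "w2 \<in> A" "w2 \<in> B" "w2 \<notin> C" using li8(2) by blast
  obtain w3 where w3: "w3 \<in> A" "w3 \<notin> B" "w3 \<in> C" using li8(3) by blast
  obtain w4 where w4: "w4 \<in> A" "w4 \<notin> B" "w4 \<notin> C" using li8(4) by blast
  have part1: "\<forall>i < length ?as. fst (snd (?as ! i)) \<noteq> {}"
  proof (intro allI impI)
    fix i assume "i < length ?as"
    then have "i = 0 \<or> i = 1 \<or> i = 2" by auto
    then show "fst (snd (?as ! i)) \<noteq> {}" using w1 by auto
  qed
  have part2: "\<exists>w \<in> (\<Union>j\<in>J. fst (snd (?as ! j))). gain ?as J s w \<ge> 0"
    if J: "J \<subseteq> {..<length ?as}" "J \<noteq> {}" for J s
  proof -
    have J3: "J \<subseteq> {..<3}" using J by (simp add: numeral_3_eq_3)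
    define c0 where "c0 = (if 0\<in>J then s 0 else 0)"
    define c1 where "c1 = (if 1\<in>J then s 1 else 0)"
    define c2 where "c2 = (if 2\<in>J then s 2 else 0)"
    have g: "\<And>w. gain ?as J s w = c0 * indicator A w * (indicator C w - x)
      + c1 * indicator A w * (indicator B w - y) + c2 * indicator (A\<inter>B) w * (indicator C w - z)"
      unfolding c0_def c1_def c2_def by (rule gain3[OF J3])
    have G1: "gain ?as J s w1 = c0*(1-x) + c1*(1-y) + c2*(1-z)" using g w1 by simp
    have G2: "gain ?as J s w2 = - c0*x + c1*(1-y) - c2*z" using g w2 by simp
    have G3: "gain ?as J s w3 = c0*(1-x) - c1*y" using g w3 by simp
    have G4: "gain ?as J s w4 = - c0*x - c1*y" using g w4 by simp
    show ?thesis
    proof (cases "0 \<in> J \<or> 1 \<in> J")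
      case True
      have UA: "A \<subseteq> (\<Union>j\<in>J. fst (snd (?as ! j)))" using True by auto
      define p1 where "p1 = z*y"
      define p2 where "p2 = (1-z)*y"
      define p3 where "p3 = x - z*y"
      define p4 where "p4 = 1 - y - x + z*y"
      have p: "p1 \<ge> 0" "p2 \<ge> 0" "p3 \<ge> 0" "p4 \<ge> 0" "p1+p2+p3+p4 = 1"
        unfolding p1_def p2_def p3_def p4_def using z0 z1 y0 l u by (auto simp: algebra_simps mult_left_le)
      define g1 where "g1 = gain ?as J s w1"
      define g2 where "g2 = gain ?as J s w2"
      define g3 where "g3 = gain ?as J s w3"
      define g4 where "g4 = gain ?as J s w4"
      have id: "p1*g1 + p2*g2 + p3*g3 + p4*g4 = 0"
        unfolding g1_def g2_def g3_def g4_def G1 G2 G3 G4 p1_def p2_def p3_def p4_def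
        by (simp add: algebra_simps)
      have "g1 \<ge> 0 \<or> g2 \<ge> 0 \<or> g3 \<ge> 0 \<or> g4 \<ge> 0"
      proof (rule ccontr)
        assume "\<not> ?thesis"
        then have n: "g1 < 0" "g2 < 0" "g3 < 0" "g4 < 0" by auto
        define M where "M = max (max g1 g2) (max g3 g4)"
        have M: "M < 0" "g1 \<le> M" "g2 \<le> M" "g3 \<le> M" "g4 \<le> M" using n unfolding M_def by auto
        have "p1*g1 \<le> p1*M" "p2*g2 \<le> p2*M" "p3*g3 \<le> p3*M" "p4*g4 \<le> p4*M"
          using M p by (simp_all add: mult_left_mono)
        then have "p1*g1 + p2*g2 + p3*g3 + p4*g4 \<le> (p1+p2+p3+p4)*M" by (simp add: algebra_simps)
        then show False using id p M by simp
      qed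
      moreover have "w1 \<in> (\<Union>j\<in>J. fst (snd (?as ! j)))" "w2 \<in> (\<Union>j\<in>J. fst (snd (?as ! j)))"
        "w3 \<in> (\<Union>j\<in>J. fst (snd (?as ! j)))" "w4 \<in> (\<Union>j\<in>J. fst (snd (?as ! j)))"
        using UA w1(1) w2(1) w3(1) w4(1) by (simp_all only: subsetD)
      ultimately show ?thesis unfolding g1_def g2_def g3_def g4_def by (elim disjE) (rule bexI; assumption)+
    next
      case False
      obtain j where "j \<in> J" using J(2) by blast
      moreover have "j < 3" using J3 \<open>j \<in> J\<close> by blast
      then have "j = 0 \<or> j = 1 \<or> j = 2" by auto
      ultimately have "2 \<in> J" using False by auto
      moreover have "fst (snd (?as ! 2)) = A \<inter> B" by simp
      ultimately have U: "A \<inter> B \<subseteq> (\<Union>j\<in>J. fst (snd (?as ! j)))"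
        by (metis UN_upper)
      have c: "c0 = 0" "c1 = 0" using False unfolding c0_def c1_def by auto
      have "gain ?as J s w1 \<ge> 0 \<or> gain ?as J s w2 \<ge> 0"
      proof (cases "c2 \<ge> 0")
        case True then show ?thesis using G1 c z1 by simp
      next
        case False then show ?thesis using G2 c z0 by (simp add: mult_nonpos_nonneg)
      qed
      moreover have "w1 \<in> (\<Union>j\<in>J. fst (snd (?as ! j)))" "w2 \<in> (\<Union>j\<in>J. fst (snd (?as ! j)))"
        using U w1 w2 by (simp_all only: subsetD IntI)
      ultimately show ?thesis by (elim disjE) (rule bexI; assumption)+
    qed
  qed
  show ?thesis unfolding coherent_def using part1 part2 by blast
qed


theorem mainTheorem1:
  fixes A B C :: "'w set" and \<alpha>1 \<beta>1 \<alpha>2 \<beta>2 :: real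
  assumes "logically_independent3 A B C"
    and "0 \<le> \<alpha>1" "\<alpha>1 \<le> \<beta>1" "\<beta>1 \<le> 1"
    and "0 \<le> \<alpha>2" "\<alpha>2 \<le> \<beta>2" "\<beta>2 \<le> 1"
  shows "{z. \<exists>x \<in> {\<alpha>1..\<beta>1}. \<exists>y \<in> {\<alpha>2..\<beta>2}.
              coherent [(C, A, x), (B, A, y), (C, A \<inter> B, z)]}
         = {(if \<alpha>1 + \<alpha>2 > 1 then (\<alpha>1 + \<alpha>2 - 1) / \<alpha>2 else 0) ..
            (if \<beta>1 < \<alpha>2 then \<beta>1 / \<alpha>2 else 1)}"
proof (intro set_eqI iffI)
  fix z
  assume "z \<in> {z. \<exists>x \<in> {\<alpha>1..\<beta>1}. \<exists>y \<in> {\<alpha>2..\<beta>2}.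
              coherent [(C, A, x), (B, A, y), (C, A \<inter> B, z)]}"
  then obtain x y where x: "\<alpha>1 \<le> x" "x \<le> \<beta>1" and y: "\<alpha>2 \<le> y" "y \<le> \<beta>2"
    and coh: "coherent [(C, A, x), (B, A, y), (C, A \<inter> B, z)]" by auto
  note n = nec[OF coh]
  have lo: "(if \<alpha>1 + \<alpha>2 > 1 then (\<alpha>1 + \<alpha>2 - 1) / \<alpha>2 else 0) \<le> z"
  proof (cases "\<alpha>1 + \<alpha>2 > 1")
    case True
    then have a2: "\<alpha>2 > 0" using assms by linarith
    have "\<alpha>2 * (1 - z) \<le> y * (1 - z)" using y n by (simp add: mult_right_mono)
    then have "\<alpha>1 + \<alpha>2 - 1 \<le> z * \<alpha>2" using x n by (simp add: algebra_simps)
    then show ?thesis using True a2 by (simp add: pos_divide_le_eq)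
  next
    case False then show ?thesis using n by simp
  qed
  have hi: "z \<le> (if \<beta>1 < \<alpha>2 then \<beta>1 / \<alpha>2 else 1)"
  proof (cases "\<beta>1 < \<alpha>2")
    case True
    then have a2: "\<alpha>2 > 0" using assms by linarith
    have "z * \<alpha>2 \<le> z * y" using y n by (simp add: mult_left_mono)
    then have "z * \<alpha>2 \<le> \<beta>1" using x n by linarith
    then show ?thesis using True a2 by (simp add: pos_le_divide_eq)
  next
    case False then show ?thesis using n by simp
  qed
  show "z \<in> {(if \<alpha>1 + \<alpha>2 > 1 then (\<alpha>1 + \<alpha>2 - 1) / \<alpha>2 else 0) ..
            (if \<beta>1 < \<alpha>2 then \<beta>1 / \<alpha>2 else 1)}" using lo hi by simp
next
  fix z
  assume "z \<in> {(if \<alpha>1 + \<alpha>2 > 1 then (\<alpha>1 + \<alpha>2 - 1) / \<alpha>2 else 0) ..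
            (if \<beta>1 < \<alpha>2 then \<beta>1 / \<alpha>2 else 1)}"
  then have lo: "(if \<alpha>1 + \<alpha>2 > 1 then (\<alpha>1 + \<alpha>2 - 1) / \<alpha>2 else 0) \<le> z"
    and hi: "z \<le> (if \<beta>1 < \<alpha>2 then \<beta>1 / \<alpha>2 else 1)" by auto
  have z0: "0 \<le> z" and L: "\<alpha>1 \<le> z * \<alpha>2 + 1 - \<alpha>2"
  proof -
    have "0 \<le> z \<and> \<alpha>1 \<le> z * \<alpha>2 + 1 - \<alpha>2"
    proof (cases "\<alpha>1 + \<alpha>2 > 1")
      case True
      then have a2: "\<alpha>2 > 0" using assms by linarith
      have "(\<alpha>1 + \<alpha>2 - 1) / \<alpha>2 \<le> z" using lo True by simp
      then have "\<alpha>1 + \<alpha>2 - 1 \<le> z * \<alpha>2" using a2 by (simp add: pos_divide_le_eq)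
      moreover have "0 \<le> (\<alpha>1 + \<alpha>2 - 1) / \<alpha>2" using True a2 by simp
      ultimately show ?thesis using lo True by simp
    next
      case False
      then have "0 \<le> z" using lo by simp
      moreover have "0 \<le> z * \<alpha>2" using \<open>0 \<le> z\<close> assms by simp
      ultimately show ?thesis using False by linarith
    qed
    then show "0 \<le> z" "\<alpha>1 \<le> z * \<alpha>2 + 1 - \<alpha>2" by auto
  qed
  have z1: "z \<le> 1" and U: "z * \<alpha>2 \<le> \<beta>1"
  proof -
    have "z \<le> 1 \<and> z * \<alpha>2 \<le> \<beta>1"
    proof (cases "\<beta>1 < \<alpha>2")
      case True
      then have a2: "\<alpha>2 > 0" using assms by linarith
      have "z \<le> \<beta>1 / \<alpha>2" using hi True by simp
      then have "z * \<alpha>2 \<le> \<beta>1" using a2 by (simp add: pos_le_divide_eq)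
      moreover have "\<beta>1 / \<alpha>2 \<le> 1" using True a2 by simp
      ultimately show ?thesis using \<open>z \<le> \<beta>1 / \<alpha>2\<close> by linarith
    next
      case False
      then have "z \<le> 1" using hi by simp
      moreover have "z * \<alpha>2 \<le> \<alpha>2" using \<open>z \<le> 1\<close> assms using mult_right_mono[of z 1 \<alpha>2] by simp
      ultimately show ?thesis using False by linarith
    qed
    then show "z \<le> 1" "z * \<alpha>2 \<le> \<beta>1" by auto
  qed
  define x where "x = max \<alpha>1 (z * \<alpha>2)"
  have "x \<in> {\<alpha>1..\<beta>1}" using U assms unfolding x_def by auto
  moreover have "\<alpha>2 \<in> {\<alpha>2..\<beta>2}" using assms by auto
  moreover have "coherent [(C, A, x), (B, A, \<alpha>2), (C, A \<inter> B, z)]"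
  proof (rule suff[OF assms(1) z0 z1])
    show "0 \<le> \<alpha>2" "\<alpha>2 \<le> 1" using assms by auto
    show "z * \<alpha>2 \<le> x" unfolding x_def by simp
    show "x \<le> z * \<alpha>2 + 1 - \<alpha>2" unfolding x_def using L assms by auto
  qed
  ultimately show "z \<in> {z. \<exists>x \<in> {\<alpha>1..\<beta>1}. \<exists>y \<in> {\<alpha>2..\<beta>2}.
              coherent [(C, A, x), (B, A, y), (C, A \<inter> B, z)]}" by blast
qed

end
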